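(* Let $G=(V,E,w)$ be a connected graph with uniform weights, $w_{ij}=1$ for all $\{i,j\}\in E$. Then \[ \frac{\mathrm{PROD}(G)}{\mathrm{OPT}(G)}\geq\frac13+\frac23\left(\frac{|E|}{2|E|+|V|}\right). \] Moreover, there exists a computational basis state $|s\rangle$, $s\in\{0,1\}^{|V|}$, whose energy $\langle s|H_G|s\rangle$ satisfies this inequality in place of $\mathrm{PROD}(G)$.
   Context: Qubits are placed on the vertices of $G$; with Pauli operators $X_i,Y_i,Z_i$ on qubit $i$, define $h_{ij}=\frac12(I-X_iX_j-Y_iY_j-Z_iZ_j)$ and $H_G=\sum_{\{i,j\}\in E} w_{ij}h_{ij}$. $\mathrm{OPT}(G)=\|H_G\|$ is its largest eigenvalue, and $\mathrm{PROD}(G)$ is the maximum of $\langle\phi|H_G|\phi\rangle$ over product states $\phi=\phi_1\otimes\cdots\otimes\phi_{|V|}$. *)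

theory Defs
  imports "HOL-Analysis.Analysis" "Jordan_Normal_Form.Matrix" "Jordan_Normal_Form.Char_Poly"
begin

(* Qubit i of the computational-basis index k (0 <= k < 2^n) is bit i of k. *)
definition bit_of :: "nat \<Rightarrow> nat \<Rightarrow> nat" where
  "bit_of k i = k div 2 ^ i mod 2"

definition pauliX :: "complex mat" where
  "pauliX = mat 2 2 (\<lambda>(a,b). if a \<noteq> b then 1 else 0)"

definition pauliY :: "complex mat" where
  "pauliY = mat 2 2 (\<lambda>(a,b). if a = 0 \<and> b = 1 then - \<i> else if a = 1 \<and> b = 0 then \<i> else 0)"

definition pauliZ :: "complex mat" where
  "pauliZ = mat 2 2 (\<lambda>(a,b). if a = b then (if a = 0 then 1 else -1) else 0)"

(* The single-qubit operator P acting on qubit i of an n-qubit register,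
   i.e. I \<otimes> ... \<otimes> P \<otimes> ... \<otimes> I, written entrywise. *)
definition on_qubit :: "nat \<Rightarrow> complex mat \<Rightarrow> nat \<Rightarrow> complex mat" where
  "on_qubit n P i = mat (2 ^ n) (2 ^ n) (\<lambda>(a,b).
      P $$ (bit_of a i, bit_of b i) *
      (if \<forall>j<n. j \<noteq> i \<longrightarrow> bit_of a j = bit_of b j then 1 else 0))"

definition h_term :: "nat \<Rightarrow> nat \<Rightarrow> nat \<Rightarrow> complex mat" where
  "h_term n i j = (1/2 :: complex) \<cdot>\<^sub>m
     (1\<^sub>m (2 ^ n) - on_qubit n pauliX i * on_qubit n pauliX j
                  - on_qubit n pauliY i * on_qubit n pauliY j
                  - on_qubit n pauliZ i * on_qubit n pauliZ j)"

definition simple_graph :: "nat \<Rightarrow> nat set set \<Rightarrow> bool" where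
  "simple_graph n E \<longleftrightarrow> (\<forall>e\<in>E. \<exists>i j. i < n \<and> j < n \<and> i \<noteq> j \<and> e = {i, j})"

definition connected_graph :: "nat \<Rightarrow> nat set set \<Rightarrow> bool" where
  "connected_graph n E \<longleftrightarrow>
     (\<forall>u<n. \<forall>v<n. (u, v) \<in> {(i, j). {i, j} \<in> E}\<^sup>*)"

definition hamiltonian :: "nat \<Rightarrow> nat set set \<Rightarrow> (nat set \<Rightarrow> real) \<Rightarrow> complex mat" where
  "hamiltonian n E w = mat (2 ^ n) (2 ^ n) (\<lambda>(a,b).
      \<Sum>e\<in>E. complex_of_real (w e) * h_term n (Min e) (Max e) $$ (a, b))"

(* <v|H|v> (real part; it is real for Hermitian H) *)
definition energy :: "complex mat \<Rightarrow> complex vec \<Rightarrow> real" where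
  "energy H v = Re (\<Sum>k<dim_vec v. cnj (v $ k) * (H *\<^sub>v v) $ k)"

definition OPT_G :: "nat \<Rightarrow> nat set set \<Rightarrow> (nat set \<Rightarrow> real) \<Rightarrow> real" where
  "OPT_G n E w = Max (Re ` {k. eigenvalue (hamiltonian n E w) k})"

definition product_state :: "nat \<Rightarrow> complex vec \<Rightarrow> bool" where
  "product_state n v \<longleftrightarrow> (\<exists>\<phi> :: nat \<Rightarrow> nat \<Rightarrow> complex.
      (\<forall>i<n. (cmod (\<phi> i 0))\<^sup>2 + (cmod (\<phi> i 1))\<^sup>2 = 1) \<and>
      v = vec (2 ^ n) (\<lambda>k. \<Prod>i<n. \<phi> i (bit_of k i)))"

definition PROD_G :: "nat \<Rightarrow> nat set set \<Rightarrow> (nat set \<Rightarrow> real) \<Rightarrow> real" where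
  "PROD_G n E w = Sup ((\<lambda>v. energy (hamiltonian n E w) v) ` {v. product_state n v})"

(* computational basis state |s>, s encoded by the index k < 2^n *)
definition comp_basis :: "nat \<Rightarrow> nat \<Rightarrow> complex vec" where
  "comp_basis n k = unit_vec (2 ^ n) k"

end

theory Submission
  imports Defs "Jordan_Normal_Form.Schur_Decomposition" "Jordan_Normal_Form.Spectral_Radius"
begin

unbundle no vec_syntax

lemma nat_bit_eq_iff: "(x::nat) = y \<longleftrightarrow> (\<forall>k. bit x k = bit y k)"
  by (auto intro: bit_eqI)

lemma lt_pow_iff: "(a::nat) < 2^n \<longleftrightarrow> (\<forall>k\<ge>n. \<not> bit a k)"
proof -
  have "a < 2^n \<longleftrightarrow> take_bit n a = a" by (simp add: take_bit_nat_eq_self_iff)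
  also have "\<dots> \<longleftrightarrow> (\<forall>k. bit (take_bit n a) k = bit a k)" by (rule nat_bit_eq_iff)
  also have "\<dots> \<longleftrightarrow> (\<forall>k. (k < n \<and> bit a k) = bit a k)" by (simp only: bit_take_bit_iff)
  also have "\<dots> \<longleftrightarrow> (\<forall>k\<ge>n. \<not> bit a k)" using not_le by blast
  finally show ?thesis .
qed

lemma nat_eq_bits: "(a::nat) < 2^n \<Longrightarrow> b < 2^n \<Longrightarrow> (\<forall>k<n. bit a k = bit b k) \<Longrightarrow> a = b"
  by (metis nat_bit_eq_iff lt_pow_iff not_less)

lemma bit_of_eq: "bit_of k i = (if bit k i then 1 else 0)"
  unfolding bit_of_def bit_nat_def by (simp add: odd_iff_mod_2_eq_one even_iff_mod_2_eq_zero)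

lemma bit_of_lt: "bit_of k i < 2" by (simp add: bit_of_eq)

lemma bit_pow2: "bit ((2::nat)^p) r \<longleftrightarrow> r = p"
  by (simp add: bit_exp_iff)

definition cc :: "nat \<Rightarrow> nat \<Rightarrow> nat" where "cc p q = xor (2^p) (2^q)"

lemma bit_cc: "p \<noteq> q \<Longrightarrow> bit (cc p q) r \<longleftrightarrow> (r = p \<or> r = q)"
  unfolding cc_def by (auto simp: bit_xor_iff bit_pow2)

lemma xor_lt: "(a::nat) < 2^n \<Longrightarrow> b < 2^n \<Longrightarrow> xor a b < 2^n"
  by (simp add: lt_pow_iff bit_xor_iff)

lemma pow_lt: "p < n \<Longrightarrow> (2::nat)^p < 2^n" by simp

lemma cc_lt: "p < n \<Longrightarrow> q < n \<Longrightarrow> cc p q < 2^n"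
  unfolding cc_def by (intro xor_lt pow_lt)

definition swp :: "nat \<Rightarrow> nat \<Rightarrow> nat \<Rightarrow> nat" where
  "swp p q a = (if bit a p = bit a q then a else xor a (cc p q))"

lemma bit_swp: "p \<noteq> q \<Longrightarrow> bit (swp p q a) r = bit a (if r = p then q else if r = q then p else r)"
  unfolding swp_def by (auto simp: bit_xor_iff bit_cc)

lemma swp_lt: "p < n \<Longrightarrow> q < n \<Longrightarrow> a < 2^n \<Longrightarrow> swp p q a < 2^n"
  unfolding swp_def by (auto intro: xor_lt cc_lt)

lemma swp_swp: "p \<noteq> q \<Longrightarrow> swp p q (swp p q a) = a"
  by (rule bit_eqI) (auto simp: bit_swp)

lemma swp_comm: "swp p q = swp q p"
  by (rule ext) (simp add: swp_def cc_def xor.commute)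

lemma flip_bit_xor: "flip_bit i (a::nat) = xor a (2^i)"
  by (rule bit_eqI) (auto simp: bit_flip_bit_iff bit_xor_iff bit_pow2)

lemma flip_lt: "i < n \<Longrightarrow> (a::nat) < 2^n \<Longrightarrow> flip_bit i a < 2^n"
  unfolding flip_bit_xor by (intro xor_lt pow_lt)

lemma flip_flip_cc: "i \<noteq> j \<Longrightarrow> flip_bit j (flip_bit i a) = xor a (cc i j)"
  by (rule bit_eqI) (auto simp: bit_flip_bit_iff bit_xor_iff bit_cc)

lemma mv_entry:
  assumes "M \<in> carrier_mat N N" "v \<in> carrier_vec N" "a < N"
  shows "(M *\<^sub>v v) $ a = (\<Sum>b<N. M $$ (a, b) * v $ b)"
  using assms by (auto simp: scalar_prod_def atLeast0LessThan intro!: sum.cong)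

lemma on_qubit_dims[simp]: "dim_row (on_qubit n P i) = 2^n" "dim_col (on_qubit n P i) = 2^n"
  unfolding on_qubit_def by simp_all

lemma on_qubit_carrier: "on_qubit n P i \<in> carrier_mat (2^n) (2^n)"
  unfolding on_qubit_def by simp

lemma agree_iff:
  assumes "i < n" "a < 2^n" "(b::nat) < 2^n"
  shows "(\<forall>j<n. j \<noteq> i \<longrightarrow> bit_of a j = bit_of b j) \<longleftrightarrow> (b = a \<or> b = flip_bit i a)"
proof
  assume h: "\<forall>j<n. j \<noteq> i \<longrightarrow> bit_of a j = bit_of b j"
  hence h': "\<forall>j<n. j \<noteq> i \<longrightarrow> bit a j = bit b j" by (auto simp: bit_of_eq split: if_splits)
  show "b = a \<or> b = flip_bit i a"
  proof (cases "bit b i = bit a i")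
    case True
    then have "b = a" using h' by (intro nat_eq_bits[OF assms(3) assms(2)]) auto
    then show ?thesis by simp
  next
    case False
    have "b = flip_bit i a"
      using h' False flip_lt[OF assms(1,2)]
      by (intro nat_eq_bits[OF assms(3)]) (auto simp: bit_flip_bit_iff)
    then show ?thesis by simp
  qed
next
  assume "b = a \<or> b = flip_bit i a"
  then show "\<forall>j<n. j \<noteq> i \<longrightarrow> bit_of a j = bit_of b j"
    by (auto simp: bit_of_eq bit_flip_bit_iff)
qed

lemma flip_neq: "flip_bit i (a::nat) \<noteq> a"
proof
  assume "flip_bit i a = a"
  then have "bit (flip_bit i a) i = bit a i" by simp
  then show False by (simp add: bit_flip_bit_iff)
qed

lemma on_qubit_act:
  assumes "i < n" "a < 2^n" "u \<in> carrier_vec (2^n)"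
  shows "(on_qubit n P i *\<^sub>v u) $ a =
     P $$ (bit_of a i, bit_of a i) * u $ a + P $$ (bit_of a i, 1 - bit_of a i) * u $ (flip_bit i a)"
proof -
  let ?F = "\<lambda>b. P $$ (bit_of a i, bit_of b i) * u $ b"
  have "(on_qubit n P i *\<^sub>v u) $ a = (\<Sum>b<2^n. on_qubit n P i $$ (a, b) * u $ b)"
    by (rule mv_entry[OF on_qubit_carrier assms(3) assms(2)])
  also have "\<dots> = (\<Sum>b\<in>{a, flip_bit i a}. ?F b)"
  proof (rule sum.mono_neutral_cong_right)
    show "{a, flip_bit i a} \<subseteq> {..<2^n}" using flip_lt[OF assms(1,2)] assms(2) by auto
    show "\<forall>b\<in>{..<2 ^ n} - {a, flip_bit i a}. on_qubit n P i $$ (a, b) * u $ b = 0"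
      using agree_iff[OF assms(1,2)] assms(2) by (auto simp: on_qubit_def)
    fix b assume "b \<in> {a, flip_bit i a}"
    then have "b < 2^n" "\<forall>j<n. j \<noteq> i \<longrightarrow> bit_of a j = bit_of b j"
      using agree_iff[OF assms(1,2)] flip_lt[OF assms(1,2)] assms(2) by auto
    then show "on_qubit n P i $$ (a, b) * u $ b = ?F b"
      using assms(2) by (simp add: on_qubit_def)
  qed simp
  also have "\<dots> = ?F a + ?F (flip_bit i a)" using flip_neq[of i a] by simp
  also have "bit_of (flip_bit i a) i = 1 - bit_of a i"
    by (simp add: bit_of_eq bit_flip_bit_iff)
  finally show ?thesis by simp
qed

lemma X_act:
  assumes "i < n" "a < 2^n" "u \<in> carrier_vec (2^n)"
  shows "(on_qubit n pauliX i *\<^sub>v u) $ a = u $ (flip_bit i a)"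
  unfolding on_qubit_act[OF assms] using bit_of_lt[of a i]
  by (auto simp: pauliX_def bit_of_eq)

lemma Y_act:
  assumes "i < n" "a < 2^n" "u \<in> carrier_vec (2^n)"
  shows "(on_qubit n pauliY i *\<^sub>v u) $ a = (if bit a i then \<i> else - \<i>) * u $ (flip_bit i a)"
  unfolding on_qubit_act[OF assms] using bit_of_lt[of a i]
  by (auto simp: pauliY_def bit_of_eq)

lemma Z_act:
  assumes "i < n" "a < 2^n" "u \<in> carrier_vec (2^n)"
  shows "(on_qubit n pauliZ i *\<^sub>v u) $ a = (if bit a i then -1 else 1) * u $ a"
  unfolding on_qubit_act[OF assms] using bit_of_lt[of a i]
  by (auto simp: pauliZ_def bit_of_eq)

lemma h_act:
  assumes ij: "i < n" "j < n" "i \<noteq> j" and a: "a < 2^n" and v: "v \<in> carrier_vec (2^n)"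
  shows "(h_term n i j *\<^sub>v v) $ a = v $ a - v $ (swp i j a)"
proof -
  let ?N = "(2::nat)^n"
  define A where "A = on_qubit n pauliX i * on_qubit n pauliX j"
  define B where "B = on_qubit n pauliY i * on_qubit n pauliY j"
  define C where "C = on_qubit n pauliZ i * on_qubit n pauliZ j"
  have cA: "A \<in> carrier_mat ?N ?N" and cB: "B \<in> carrier_mat ?N ?N" and cC: "C \<in> carrier_mat ?N ?N"
    unfolding A_def B_def C_def by (auto intro!: mult_carrier_mat on_qubit_carrier)
  have fa: "flip_bit i a < ?N" using flip_lt[OF ij(1) a] .
  have vX: "on_qubit n pauliX j *\<^sub>v v \<in> carrier_vec ?N"
    and vY: "on_qubit n pauliY j *\<^sub>v v \<in> carrier_vec ?N"
    and vZ: "on_qubit n pauliZ j *\<^sub>v v \<in> carrier_vec ?N"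
    using on_qubit_carrier v by (auto intro!: mult_mat_vec_carrier)
  have eA: "(A *\<^sub>v v) $ a = v $ (flip_bit j (flip_bit i a))"
    unfolding A_def
    by (simp add: assoc_mult_mat_vec[OF on_qubit_carrier on_qubit_carrier v]
        X_act[OF ij(1) a vX] X_act[OF ij(2) fa v])
  have eB: "(B *\<^sub>v v) $ a = (if bit a i then \<i> else - \<i>) * ((if bit a j then \<i> else - \<i>) * v $ (flip_bit j (flip_bit i a)))"
    unfolding B_def using ij by (simp add: assoc_mult_mat_vec[OF on_qubit_carrier on_qubit_carrier v]
        Y_act[OF ij(1) a vY] Y_act[OF ij(2) fa v] bit_flip_bit_iff)
  have eC: "(C *\<^sub>v v) $ a = (if bit a i then -1 else 1) * ((if bit a j then -1 else 1) * v $ a)"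
    unfolding C_def
    by (simp add: assoc_mult_mat_vec[OF on_qubit_carrier on_qubit_carrier v]
        Z_act[OF ij(1) a vZ] Z_act[OF ij(2) a v])
  have hdef: "h_term n i j = (1/2) \<cdot>\<^sub>m (1\<^sub>m ?N - A - B - C)"
    unfolding h_term_def A_def B_def C_def ..
  have hc: "h_term n i j \<in> carrier_mat ?N ?N" unfolding hdef
    by (intro smult_carrier_mat minus_carrier_mat cC)
  have hent: "h_term n i j $$ (a, b) = (1/2) * ((if a = b then 1 else 0) - A $$ (a,b) - B $$ (a,b) - C $$ (a,b))"
    if "b < ?N" for b
    using that a cA cB cC unfolding hdef by simp
  have "(h_term n i j *\<^sub>v v) $ a = (\<Sum>b<?N. h_term n i j $$ (a, b) * v $ b)"
    by (rule mv_entry[OF hc v a])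
  also have "\<dots> = (\<Sum>b<?N. (1/2) * ((if a = b then 1 else 0) * v $ b - A $$ (a,b) * v $ b
        - B $$ (a,b) * v $ b - C $$ (a,b) * v $ b))"
    by (intro sum.cong refl) (simp add: hent algebra_simps)
  also have "\<dots> = (1/2) * ((\<Sum>b<?N. (if a = b then 1 else 0) * v $ b) - (\<Sum>b<?N. A $$ (a,b) * v $ b)
        - (\<Sum>b<?N. B $$ (a,b) * v $ b) - (\<Sum>b<?N. C $$ (a,b) * v $ b))"
    by (simp only: sum_distrib_left[symmetric] sum_subtractf)
  also have "(\<Sum>b<?N. (if a = b then 1 else 0) * v $ b) = (\<Sum>b<?N. if a = b then v $ b else 0)"
    by (intro sum.cong refl) simp
  also have "\<dots> = v $ a"
    using a by (simp add: sum.delta)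
  also have "(1/2) * (v $ a - (\<Sum>b<?N. A $$ (a,b) * v $ b) - (\<Sum>b<?N. B $$ (a,b) * v $ b)
        - (\<Sum>b<?N. C $$ (a,b) * v $ b)) = (1/2) * (v $ a - (A *\<^sub>v v) $ a - (B *\<^sub>v v) $ a - (C *\<^sub>v v) $ a)"
    by (simp only: mv_entry[OF cA v a] mv_entry[OF cB v a] mv_entry[OF cC v a])
  also have "\<dots> = v $ a - v $ (swp i j a)"
    unfolding eA eB eC flip_flip_cc[OF ij(3)] swp_def
    by (cases "bit a i"; cases "bit a j") (simp_all add: algebra_simps)
  finally show ?thesis .
qed

lemma edge_props:
  assumes "simple_graph n E" "e \<in> E"
  shows "Min e < Max e" "Max e < n" "e = {Min e, Max e}"
proof -
  obtain i j where ij: "i < n" "j < n" "i \<noteq> j" "e = {i, j}"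
    using assms unfolding simple_graph_def by blast
  show "Min e < Max e" "Max e < n" "e = {Min e, Max e}"
    using ij by (auto simp: min_def max_def)
qed

lemma finite_E: assumes "simple_graph n E" shows "finite E"
proof -
  have "E \<subseteq> Pow {..<n}" using assms unfolding simple_graph_def by auto
  then show ?thesis by (rule finite_subset) simp
qed

definition sw :: "nat set \<Rightarrow> nat \<Rightarrow> nat" where "sw e = swp (Min e) (Max e)"

lemma ham_carrier: "hamiltonian n E w \<in> carrier_mat (2^n) (2^n)"
  unfolding hamiltonian_def by simp

lemma H_act:
  assumes G: "simple_graph n E" and v: "v \<in> carrier_vec (2^n)" and a: "a < 2^n"
  shows "(hamiltonian n E (\<lambda>_. 1) *\<^sub>v v) $ a = (\<Sum>e\<in>E. v $ a - v $ (sw e a))"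
proof -
  let ?N = "(2::nat)^n"
  have hc: "h_term n (Min e) (Max e) \<in> carrier_mat ?N ?N" for e
    unfolding h_term_def
    by (intro smult_carrier_mat minus_carrier_mat mult_carrier_mat[OF on_qubit_carrier on_qubit_carrier])
  have "(hamiltonian n E (\<lambda>_. 1) *\<^sub>v v) $ a = (\<Sum>b<?N. hamiltonian n E (\<lambda>_. 1) $$ (a, b) * v $ b)"
    by (rule mv_entry[OF ham_carrier v a])
  also have "\<dots> = (\<Sum>b<?N. \<Sum>e\<in>E. h_term n (Min e) (Max e) $$ (a, b) * v $ b)"
    using a by (intro sum.cong refl) (simp add: hamiltonian_def sum_distrib_right)
  also have "\<dots> = (\<Sum>e\<in>E. \<Sum>b<?N. h_term n (Min e) (Max e) $$ (a, b) * v $ b)"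
    by (rule sum.swap)
  also have "\<dots> = (\<Sum>e\<in>E. (h_term n (Min e) (Max e) *\<^sub>v v) $ a)"
    by (intro sum.cong refl) (simp only: mv_entry[OF hc v a])
  also have "\<dots> = (\<Sum>e\<in>E. v $ a - v $ (sw e a))"
  proof (intro sum.cong refl)
    fix e assume e: "e \<in> E"
    have "Min e < n" "Max e < n" "Min e \<noteq> Max e" using edge_props[OF G e] by auto
    then show "(h_term n (Min e) (Max e) *\<^sub>v v) $ a = v $ a - v $ (sw e a)"
      unfolding sw_def by (rule h_act[OF _ _ _ a v])
  qed
  finally show ?thesis .
qed

lemma sw_lt: "simple_graph n E \<Longrightarrow> e \<in> E \<Longrightarrow> a < 2^n \<Longrightarrow> sw e a < 2^n"
  unfolding sw_def using edge_props swp_lt by (metis order.strict_trans)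

lemma sw_sw: "simple_graph n E \<Longrightarrow> e \<in> E \<Longrightarrow> sw e (sw e a) = a"
  unfolding sw_def using edge_props by (metis less_irrefl swp_swp)

definition ip :: "nat \<Rightarrow> (nat \<Rightarrow> complex) \<Rightarrow> (nat \<Rightarrow> complex) \<Rightarrow> complex" where
  "ip N f g = (\<Sum>a<N. cnj (f a) * g a)"

lemma ip_self: "ip N f f = complex_of_real (\<Sum>a<N. (cmod (f a))^2)"
  unfolding ip_def of_real_sum by (intro sum.cong refl) (subst complex_norm_square, simp add: mult.commute)

lemma ip_self_Re: "Re (ip N f f) = (\<Sum>a<N. (cmod (f a))^2)"
  by (simp add: ip_self)

lemma ip_self_nonneg: "Re (ip N f f) \<ge> 0"
  unfolding ip_self_Re by (intro sum_nonneg) simp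

lemma ip_add: "ip N f (\<lambda>a. g a + h a) = ip N f g + ip N f h"
  unfolding ip_def by (simp add: algebra_simps sum.distrib)

lemma ip_diff: "ip N f (\<lambda>a. g a - h a) = ip N f g - ip N f h"
  unfolding ip_def by (simp add: algebra_simps sum_subtractf)

lemma ip_scale: "ip N f (\<lambda>a. c * g a) = c * ip N f g"
  unfolding ip_def by (simp add: algebra_simps sum_distrib_left)

lemma ip_sum: "ip N f (\<lambda>a. \<Sum>j\<in>J. g j a) = (\<Sum>j\<in>J. ip N f (g j))"
  unfolding ip_def by (simp add: sum_distrib_left sum.swap[of _ J])

lemma ip_add_left: "ip N (\<lambda>a. g a + h a) f = ip N g f + ip N h f"
  unfolding ip_def by (simp add: algebra_simps sum.distrib)

lemma ip_sum_left: "ip N (\<lambda>a. \<Sum>j\<in>J. g j a) f = (\<Sum>j\<in>J. ip N (g j) f)"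
  unfolding ip_def by (simp add: sum_distrib_right sum.swap[of _ J] cnj_sum)

lemma ip_cong: "(\<And>a. a < N \<Longrightarrow> g a = g' a) \<Longrightarrow> ip N f g = ip N f g'"
  unfolding ip_def by (intro sum.cong) auto

lemma reindex_inv:
  assumes "\<And>a. a < N \<Longrightarrow> s a < N" "\<And>a. a < N \<Longrightarrow> s (s a) = a"
  shows "(\<Sum>a<N. F (s a)) = (\<Sum>a<N. (F a :: 'b :: comm_monoid_add))"
  by (rule sum.reindex_bij_witness[of _ s s]) (auto simp: assms)

lemma ip_perm:
  assumes "\<And>a. a < N \<Longrightarrow> s a < N" "\<And>a. a < N \<Longrightarrow> s (s a) = a"
  shows "ip N (\<lambda>a. f (s a)) g = ip N f (\<lambda>a. g (s a))"
proof -
  have "ip N (\<lambda>a. f (s a)) g = (\<Sum>a<N. cnj (f (s a)) * g (s (s a)))"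
    unfolding ip_def by (intro sum.cong refl) (simp add: assms)
  also have "\<dots> = (\<Sum>a<N. cnj (f a) * g (s a))"
    by (rule reindex_inv[OF assms, where F = "\<lambda>b. cnj (f b) * g (s b)"])
  finally show ?thesis unfolding ip_def .
qed

lemma Re_cnj_le: "Re (cnj x * y) \<le> ((cmod x)^2 + (cmod y)^2) / 2"
proof -
  have "Re (cnj x * y) \<le> cmod (cnj x * y)" by (rule complex_Re_le_cmod)
  also have "\<dots> = cmod x * cmod y" by (simp add: norm_mult)
  also have "\<dots> \<le> ((cmod x)^2 + (cmod y)^2) / 2"
    using sum_squares_bound[of "cmod x" "cmod y"] by (simp add: power2_eq_square)
  finally show ?thesis .
qed

lemma ip_perm_le:
  assumes "\<And>a. a < N \<Longrightarrow> s a < N" "\<And>a. a < N \<Longrightarrow> s (s a) = a"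
  shows "Re (ip N f (\<lambda>a. f (s a))) \<le> Re (ip N f f)"
proof -
  have "Re (ip N f (\<lambda>a. f (s a))) = (\<Sum>a<N. Re (cnj (f a) * f (s a)))"
    unfolding ip_def by (simp add: Re_sum)
  also have "\<dots> \<le> (\<Sum>a<N. ((cmod (f a))^2 + (cmod (f (s a)))^2) / 2)"
    by (intro sum_mono Re_cnj_le)
  also have "\<dots> = ((\<Sum>a<N. (cmod (f a))^2) + (\<Sum>a<N. (cmod (f (s a)))^2)) / 2"
    by (simp add: sum.distrib sum_divide_distrib[symmetric])
  also have "(\<Sum>a<N. (cmod (f (s a)))^2) = (\<Sum>a<N. (cmod (f a))^2)"
    by (rule reindex_inv[OF assms, where F = "\<lambda>b. (cmod (f b))^2"])
  finally show ?thesis by (simp add: ip_self_Re)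
qed

lemma swp_id: "bit a p = bit a q \<Longrightarrow> swp p q a = a"
  by (simp add: swp_def)

lemma qubit3:
  assumes d: "p \<noteq> q" "p \<noteq> r" "q \<noteq> r"
  shows "f (swp p r (swp p q a)) + f (swp p q (swp p r a))
         = f (swp p q a) + f (swp p r a) + f (swp q r a) - (f a :: complex)"
proof -
  consider (c1) "bit a p = bit a q" "bit a p = bit a r"
    | (c2) "bit a p = bit a q" "bit a p \<noteq> bit a r"
    | (c3) "bit a p = bit a r" "bit a p \<noteq> bit a q"
    | (c4) "bit a q = bit a r" "bit a p \<noteq> bit a q" by blast
  then show ?thesis
  proof cases
    case c1
    then have "swp p q a = a" "swp p r a = a" "swp q r a = a" by (auto intro: swp_id)
    then show ?thesis by simp
  next
    case c2
    then have e1: "swp p q a = a" by (auto intro: swp_id)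
    have e2: "swp p q (swp p r a) = swp q r a"
      using c2 d by (intro bit_eqI) (auto simp: bit_swp)
    show ?thesis unfolding e1 e2 by simp
  next
    case c3
    then have e1: "swp p r a = a" by (auto intro: swp_id)
    have e2: "swp p r (swp p q a) = swp q r a"
      using c3 d by (intro bit_eqI) (auto simp: bit_swp)
    show ?thesis unfolding e1 e2 by simp
  next
    case c4
    then have e1: "swp q r a = a" by (auto intro: swp_id)
    have e2: "swp p r (swp p q a) = swp p q a"
      using c4 d by (intro bit_eqI) (auto simp: bit_swp)
    have e3: "swp p q (swp p r a) = swp p r a"
      using c4 d by (intro bit_eqI) (auto simp: bit_swp)
    show ?thesis unfolding e1 e2 e3 by simp
  qed
qed

lemma sum_offdiag_swap:
  assumes "finite K"
  shows "(\<Sum>j\<in>K. \<Sum>k\<in>K-{j}. F j k) = (\<Sum>j\<in>K. \<Sum>k\<in>K-{j}. (F k j :: complex))"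
proof -
  have rm: "(\<Sum>k\<in>K. if k = j then 0 else G k) = (\<Sum>k\<in>K-{j}. (G k :: complex))" for j G
    by (rule sum.mono_neutral_cong_right) (use assms in auto)
  have "(\<Sum>j\<in>K. \<Sum>k\<in>K-{j}. F j k) = (\<Sum>j\<in>K. \<Sum>k\<in>K. if k = j then 0 else F j k)"
    by (simp only: rm)
  also have "\<dots> = (\<Sum>k\<in>K. \<Sum>j\<in>K. if k = j then 0 else F j k)" by (rule sum.swap)
  also have "\<dots> = (\<Sum>k\<in>K. \<Sum>j\<in>K. if j = k then 0 else F j k)"
    by (intro sum.cong refl) auto
  also have "\<dots> = (\<Sum>k\<in>K. \<Sum>j\<in>K-{k}. F j k)"
    by (simp only: rm)
  finally show ?thesis .
qed

lemma star_bound: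
  assumes K: "finite K" "\<And>j. j \<in> K \<Longrightarrow> j < n \<and> j \<noteq> u" and u: "u < n"
  shows "Re (ip (2^n) f f + (\<Sum>j\<in>K. ip (2^n) f (\<lambda>a. f (swp u j a)))) \<ge> 0"
proof -
  define N where "N = (2::nat)^n"
  define d where "d = card K"
  define s where "s j = swp u j" for j
  define g where "g a = f a + (\<Sum>j\<in>K. f (s j a))" for a
  define q where "q = ip N f f"
  define R where "R = (\<Sum>j\<in>K. ip N f (\<lambda>a. f (s j a)))"
  define P where "P = (\<Sum>j\<in>K. \<Sum>k\<in>K-{j}. ip N f (\<lambda>a. f (s k (s j a))))"
  define T where "T = (\<Sum>j\<in>K. \<Sum>k\<in>K-{j}. ip N f (\<lambda>a. f (swp j k a)))"
  have s_lt: "j \<in> K \<Longrightarrow> a < N \<Longrightarrow> s j a < N" for j a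
    unfolding s_def N_def using K(2) u by (intro swp_lt) auto
  have s_s: "j \<in> K \<Longrightarrow> s j (s j a) = a" for j a
    unfolding s_def using K(2) by (intro swp_swp) auto
  have fg: "ip N f g = q + R"
    unfolding g_def q_def R_def by (simp add: ip_add ip_sum)
  have gs: "g (s j a) = f (s j a) + f a + (\<Sum>k\<in>K-{j}. f (s k (s j a)))" if "j \<in> K" for j a
    unfolding g_def using K(1) that by (simp add: sum.remove[OF K(1) that] s_s)
  have "ip N g g = ip N f g + (\<Sum>j\<in>K. ip N (\<lambda>a. f (s j a)) g)"
    unfolding g_def[abs_def] by (simp add: ip_add_left ip_sum_left)
  also have "(\<Sum>j\<in>K. ip N (\<lambda>a. f (s j a)) g) = (\<Sum>j\<in>K. ip N f (\<lambda>a. g (s j a)))"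
    by (intro sum.cong refl ip_perm) (auto simp: s_lt s_s)
  also have "\<dots> = (\<Sum>j\<in>K. ip N f (\<lambda>a. f (s j a)) + q + (\<Sum>k\<in>K-{j}. ip N f (\<lambda>a. f (s k (s j a)))))"
    by (intro sum.cong refl) (simp add: gs ip_add ip_sum q_def)
  also have "\<dots> = R + of_nat d * q + P"
    unfolding R_def P_def d_def by (simp add: sum.distrib)
  finally have gg: "ip N g g = q + R + (R + of_nat d * q + P)" unfolding fg .
  have "2 * P = P + (\<Sum>j\<in>K. \<Sum>k\<in>K-{j}. ip N f (\<lambda>a. f (s j (s k a))))"
    unfolding P_def by (simp add: sum_offdiag_swap[OF K(1), of "\<lambda>j k. ip N f (\<lambda>a. f (s k (s j a)))"])
  also have "\<dots> = (\<Sum>j\<in>K. \<Sum>k\<in>K-{j}. ip N f (\<lambda>a. f (s k (s j a)) + f (s j (s k a))))"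
    unfolding P_def by (simp add: ip_add sum.distrib)
  also have "\<dots> = (\<Sum>j\<in>K. \<Sum>k\<in>K-{j}. ip N f (\<lambda>a. f (s j a)) + ip N f (\<lambda>a. f (s k a))
       + ip N f (\<lambda>a. f (swp j k a)) - q)"
  proof (intro sum.cong refl)
    fix j k assume j: "j \<in> K" and k: "k \<in> K - {j}"
    have "u \<noteq> j" "u \<noteq> k" "j \<noteq> k" using K(2) j k by auto
    then have "\<And>a. f (s k (s j a)) + f (s j (s k a)) = f (s j a) + f (s k a) + f (swp j k a) - f a"
      unfolding s_def by (rule qubit3)
    then show "ip N f (\<lambda>a. f (s k (s j a)) + f (s j (s k a))) = ip N f (\<lambda>a. f (s j a)) + ip N f (\<lambda>a. f (s k a))
       + ip N f (\<lambda>a. f (swp j k a)) - q"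
      by (simp add: ip_add ip_diff q_def)
  qed
  also have "\<dots> = (\<Sum>j\<in>K. \<Sum>k\<in>K-{j}. ip N f (\<lambda>a. f (s j a))) + (\<Sum>j\<in>K. \<Sum>k\<in>K-{j}. ip N f (\<lambda>a. f (s k a)))
       + T - (\<Sum>j\<in>K. \<Sum>k\<in>K-{j}. q)"
    unfolding T_def by (simp add: sum.distrib sum_subtractf)
  also have "(\<Sum>j\<in>K. \<Sum>k\<in>K-{j}. ip N f (\<lambda>a. f (s j a))) = of_nat (d - 1) * R"
    unfolding R_def d_def sum_distrib_left
    using K(1) by (intro sum.cong refl) (simp add: card_Diff_singleton)
  also have "(\<Sum>j\<in>K. \<Sum>k\<in>K-{j}. ip N f (\<lambda>a. f (s k a))) = of_nat (d - 1) * R"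
  proof -
    have "(\<Sum>j\<in>K. \<Sum>k\<in>K-{j}. ip N f (\<lambda>a. f (s k a))) = (\<Sum>j\<in>K. R - ip N f (\<lambda>a. f (s j a)))"
      unfolding R_def using K(1) by (intro sum.cong refl) (simp add: sum.remove)
    also have "\<dots> = of_nat d * R - R" unfolding d_def by (simp add: sum_subtractf R_def)
    also have "\<dots> = of_nat (d - 1) * R"
      using K(1) by (cases d) (simp_all add: algebra_simps R_def d_def)
    finally show ?thesis .
  qed
  also have "(\<Sum>j\<in>K. \<Sum>k\<in>K-{j}. q) = of_nat d * of_nat (d - 1) * q"
    unfolding d_def using K(1) by (simp add: card_Diff_singleton)
  finally have P2: "2 * P = 2 * of_nat (d - 1) * R + T - of_nat d * of_nat (d - 1) * q" by simp
  have ReT: "Re T \<le> real d * real (d - 1) * Re q"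
  proof -
    have "Re T = (\<Sum>j\<in>K. \<Sum>k\<in>K-{j}. Re (ip N f (\<lambda>a. f (swp j k a))))"
      unfolding T_def by (simp add: Re_sum)
    also have "\<dots> \<le> (\<Sum>j\<in>K. \<Sum>k\<in>K-{j}. Re q)"
    proof (intro sum_mono)
      fix j k assume j: "j \<in> K" and k: "k \<in> K - {j}"
      have jk: "j < n" "k < n" "j \<noteq> k" using K(2) j k by auto
      show "Re (ip N f (\<lambda>a. f (swp j k a))) \<le> Re q"
        unfolding q_def using jk
        by (intro ip_perm_le) (auto simp: N_def swp_lt swp_swp)
    qed
    also have "\<dots> = real d * real (d - 1) * Re q"
      unfolding d_def using K(1) by (simp add: card_Diff_singleton)
    finally show ?thesis .
  qed
  have dR: "of_nat d * R = of_nat (d - 1) * R + R"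
    using K(1) by (cases d) (simp_all add: algebra_simps R_def d_def)
  have key: "of_nat (d + 1) * ip N f g - ip N g g = (of_nat d * of_nat (d - 1) * q - T) / 2"
    using P2 dR unfolding fg gg by (simp add: algebra_simps)
  have "Re (ip N g g) \<ge> 0" by (rule ip_self_nonneg)
  moreover have "Re ((of_nat d * of_nat (d - 1) * q - T) / 2) \<ge> 0"
    using ReT by simp
  ultimately have "Re (of_nat (d + 1) * ip N f g) \<ge> 0"
    using key by (metis Re_complex_of_real add_nonneg_nonneg diff_add_cancel plus_complex.simps(1))
  then have "real (d + 1) * Re (ip N f g) \<ge> 0" by simp
  then have "Re (ip N f g) \<ge> 0" by (simp add: zero_le_mult_iff)
  then have "Re (q + R) \<ge> 0" unfolding fg .
  then show ?thesis unfolding q_def R_def s_def N_def .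
qed

lemma nbr_props:
  assumes G: "simple_graph n E" and "{u, j} \<in> E"
  shows "j < n" "u < n" "j \<noteq> u"
proof -
  obtain a b where "a < n" "b < n" "a \<noteq> b" "{u, j} = {a, b}"
    using assms unfolding simple_graph_def by blast
  then show "j < n" "u < n" "j \<noteq> u" by (auto simp: doubleton_eq_iff)
qed

lemma double_count:
  assumes G: "simple_graph n E"
  shows "(\<Sum>u<n. \<Sum>j\<in>{j. {u, j} \<in> E}. F u j) = (\<Sum>e\<in>E. F (Min e) (Max e) + (F (Max e) (Min e) :: complex))"
proof -
  have fE: "finite E" by (rule finite_E[OF G])
  have fN: "finite {j. {u, j} \<in> E}" for u
    by (rule finite_subset[of _ "{..<n}"]) (auto dest: nbr_props[OF G])
  define D where "D = Sigma {..<n} (\<lambda>u. {j. {u, j} \<in> E})"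
  define A where "A = (\<lambda>e. (Min e, Max e)) ` E"
  define B where "B = (\<lambda>e. (Max e, Min e)) ` E"
  have "(\<Sum>u<n. \<Sum>j\<in>{j. {u, j} \<in> E}. F u j) = (\<Sum>(u, j)\<in>D. F u j)"
    unfolding D_def by (rule sum.Sigma) (auto simp: fN)
  also have "D = A \<union> B"
  proof (intro equalityI subsetI)
    fix x assume "x \<in> D"
    then obtain u j where x: "x = (u, j)" "u < n" "{u, j} \<in> E" unfolding D_def by auto
    have "j \<noteq> u" using nbr_props[OF G x(3)] by simp
    show "x \<in> A \<union> B"
    proof (cases "u < j")
      case True
      then have "Min {u, j} = u" "Max {u, j} = j" by auto
      then show ?thesis using x unfolding A_def by (auto intro!: image_eqI[of _ _ "{u, j}"])
    next
      case False
      then have "Min {u, j} = j" "Max {u, j} = u" using \<open>j \<noteq> u\<close> by auto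
      then show ?thesis using x unfolding B_def by (auto intro!: image_eqI[of _ _ "{u, j}"])
    qed
  next
    fix x assume "x \<in> A \<union> B"
    then obtain e where e: "e \<in> E" "x = (Min e, Max e) \<or> x = (Max e, Min e)"
      unfolding A_def B_def by auto
    have "Min e < n" "Max e < n" "e = {Min e, Max e}" using edge_props[OF G e(1)] by auto
    then show "x \<in> D" using e unfolding D_def by (auto simp: insert_commute)
  qed
  also have "(\<Sum>(u, j)\<in>A \<union> B. F u j) = (\<Sum>(u, j)\<in>A. F u j) + (\<Sum>(u, j)\<in>B. F u j)"
  proof (rule sum.union_disjoint)
    show "finite A" "finite B" unfolding A_def B_def using fE by auto
    show "A \<inter> B = {}"
    proof (rule ccontr)
      assume "A \<inter> B \<noteq> {}"
      then obtain e e' where "e \<in> E" "e' \<in> E" "(Min e, Max e) = (Max e', Min e')"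
        unfolding A_def B_def by auto
      then show False using edge_props[OF G, of e] edge_props[OF G, of e'] by auto
    qed
  qed
  also have "(\<Sum>(u, j)\<in>A. F u j) = (\<Sum>e\<in>E. F (Min e) (Max e))"
    unfolding A_def
  proof (subst sum.reindex)
    show "inj_on (\<lambda>e. (Min e, Max e)) E"
      by (rule inj_onI) (metis edge_props(3)[OF G] prod.inject)
  qed simp
  also have "(\<Sum>(u, j)\<in>B. F u j) = (\<Sum>e\<in>E. F (Max e) (Min e))"
    unfolding B_def
  proof (subst sum.reindex)
    show "inj_on (\<lambda>e. (Max e, Min e)) E"
      by (rule inj_onI) (metis edge_props(3)[OF G] prod.inject)
  qed simp
  finally show ?thesis by (simp add: sum.distrib)
qed

lemma swap_total:
  assumes G: "simple_graph n E"
  shows "2 * Re (\<Sum>e\<in>E. ip (2^n) f (\<lambda>a. f (sw e a))) + real n * Re (ip (2^n) f f) \<ge> 0"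
proof -
  let ?F = "\<lambda>u j. ip (2^n) f (\<lambda>a. f (swp u j a))"
  have fN: "finite {j. {u, j} \<in> E}" for u
    by (rule finite_subset[of _ "{..<n}"]) (auto dest: nbr_props[OF G])
  have "0 \<le> (\<Sum>u<n. Re (ip (2^n) f f + (\<Sum>j\<in>{j. {u, j} \<in> E}. ?F u j)))"
  proof (intro sum_nonneg)
    fix u assume u: "u \<in> {..<n}"
    show "0 \<le> Re (ip (2^n) f f + (\<Sum>j\<in>{j. {u, j} \<in> E}. ?F u j))"
      by (rule star_bound[OF fN]) (use u nbr_props[OF G] in auto)
  qed
  also have "\<dots> = real n * Re (ip (2^n) f f) + Re (\<Sum>u<n. \<Sum>j\<in>{j. {u, j} \<in> E}. ?F u j)"
    by (simp add: sum.distrib Re_sum)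
  also have "(\<Sum>u<n. \<Sum>j\<in>{j. {u, j} \<in> E}. ?F u j) = (\<Sum>e\<in>E. ?F (Min e) (Max e) + ?F (Max e) (Min e))"
    by (rule double_count[OF G])
  also have "\<dots> = 2 * (\<Sum>e\<in>E. ip (2^n) f (\<lambda>a. f (sw e a)))"
    by (simp add: sum_distrib_left sw_def swp_comm[of "Max _"])
  finally show ?thesis by simp
qed

definition par :: "nat \<Rightarrow> nat \<Rightarrow> nat \<Rightarrow> nat" where
  "par n b a = card {k. k < n \<and> bit a k \<and> bit b k}"

definition chi :: "nat \<Rightarrow> nat \<Rightarrow> nat \<Rightarrow> complex" where
  "chi n b a = (-1) ^ par n b a"

lemma cnj_chi[simp]: "cnj (chi n b a) = chi n b a"
  unfolding chi_def by simp

lemma chi_sq: "chi n b a * chi n b a = 1"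
  unfolding chi_def by (simp add: power_add[symmetric])

lemma chi_xor: "chi n b (xor a c) = chi n b a * chi n b c"
proof -
  define A where "A = {k. k < n \<and> bit a k \<and> bit b k}"
  define C where "C = {k. k < n \<and> bit c k \<and> bit b k}"
  define X where "X = {k. k < n \<and> bit (xor a c) k \<and> bit b k}"
  have fin: "finite A" "finite C" unfolding A_def C_def by auto
  have X: "X = (A - C) \<union> (C - A)"
  proof (rule Set.set_eqI)
    fix k show "k \<in> X \<longleftrightarrow> k \<in> (A - C) \<union> (C - A)"
      unfolding X_def A_def C_def by (cases "bit a k"; cases "bit c k") (simp_all add: bit_xor_iff)
  qed
  have cX: "card X = card (A - C) + card (C - A)"
    unfolding X using fin by (intro card_Un_disjoint) auto
  have cA: "card A = card (A - C) + card (A \<inter> C)"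
  proof -
    have "card ((A - C) \<union> (A \<inter> C)) = card (A - C) + card (A \<inter> C)"
      by (rule card_Un_disjoint) (use fin in auto)
    moreover have "(A - C) \<union> (A \<inter> C) = A" by blast
    ultimately show ?thesis by simp
  qed
  have cC: "card C = card (C - A) + card (A \<inter> C)"
  proof -
    have "card ((C - A) \<union> (A \<inter> C)) = card (C - A) + card (A \<inter> C)"
      by (rule card_Un_disjoint) (use fin in auto)
    moreover have "(C - A) \<union> (A \<inter> C) = C" by blast
    ultimately show ?thesis by simp
  qed
  have "card A + card C = card X + 2 * card (A \<inter> C)" using cX cA cC by simp
  then have "(-1::complex) ^ (card A + card C) = (-1) ^ card X"
    by (simp add: power_add power_mult)
  then show ?thesis unfolding chi_def par_def A_def C_def X_def by (simp add: power_add)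
qed

lemma chi_flip:
  assumes "i < n" "bit c i"
  shows "chi n (flip_bit i b) c = - chi n b c"
proof -
  define Y where "Y = {k. k < n \<and> bit c k \<and> bit b k}"
  have fY: "finite Y" unfolding Y_def by auto
  show ?thesis
  proof (cases "bit b i")
    case True
    have "{k. k < n \<and> bit c k \<and> bit (flip_bit i b) k} = Y - {i}"
      unfolding Y_def using True by (auto simp: bit_flip_bit_iff)
    moreover have "i \<in> Y" unfolding Y_def using assms True by auto
    ultimately have "par n (flip_bit i b) c + 1 = par n b c"
      unfolding par_def Y_def[symmetric] using fY
      by (metis One_nat_def Suc_pred card_Diff_singleton card_gt_0_iff empty_iff add.commute plus_1_eq_Suc)
    then have "chi n b c = chi n (flip_bit i b) c * (-1)" unfolding chi_def by (metis power_Suc2 Suc_eq_plus1)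
    then show ?thesis by simp
  next
    case False
    have "{k. k < n \<and> bit c k \<and> bit (flip_bit i b) k} = insert i Y"
      unfolding Y_def using assms False by (auto simp: bit_flip_bit_iff)
    moreover have "i \<notin> Y" unfolding Y_def using False by auto
    ultimately have "par n (flip_bit i b) c = par n b c + 1"
      unfolding par_def Y_def[symmetric] using fY by simp
    then show ?thesis unfolding chi_def by simp
  qed
qed

lemma flip_flip_same: "flip_bit i (flip_bit i (b::nat)) = b"
  by (rule bit_eqI) (auto simp: bit_flip_bit_iff)

lemma chi_zero[simp]: "chi n b 0 = 1"
  unfolding chi_def par_def by simp

lemma chi_sum:
  assumes c: "c < 2^n"
  shows "(\<Sum>b<2^n. chi n b c) = (if c = 0 then 2^n else 0)"
proof (cases "c = 0")
  case True then show ?thesis by simp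
next
  case False
  then obtain i where i: "bit c i" using nat_bit_eq_iff[of c 0] by auto
  then have "i < n" using c lt_pow_iff not_le by blast
  have "(\<Sum>b<2^n. chi n (flip_bit i b) c) = (\<Sum>b<2^n. chi n b c)"
    by (rule reindex_inv) (auto simp: flip_lt[OF \<open>i < n\<close>] flip_flip_same)
  moreover have "(\<Sum>b<2^n. chi n (flip_bit i b) c) = - (\<Sum>b<2^n. chi n b c)"
    by (simp add: chi_flip[OF \<open>i < n\<close> i] sum_negf)
  ultimately have "(\<Sum>b<2^n. chi n b c) = 0" by simp
  then show ?thesis using False by simp
qed

lemma chi_cc:
  assumes "i < n" "j < n" "i \<noteq> j"
  shows "chi n b (cc i j) = (if bit b i = bit b j then 1 else -1)"
proof -
  have S: "{k. k < n \<and> bit (cc i j) k \<and> bit b k} = {k. (k = i \<or> k = j) \<and> bit b k}"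
    using assms by (auto simp: bit_cc)
  show ?thesis
  proof (cases "bit b i"; cases "bit b j")
    assume "bit b i" "bit b j"
    then have E: "{k. (k = i \<or> k = j) \<and> bit b k} = {i, j}" by auto
    show ?thesis using assms \<open>bit b i\<close> \<open>bit b j\<close> unfolding chi_def par_def S E by simp
  next
    assume "bit b i" "\<not> bit b j"
    then have E: "{k. (k = i \<or> k = j) \<and> bit b k} = {i}" by auto
    show ?thesis using assms \<open>bit b i\<close> \<open>\<not> bit b j\<close> unfolding chi_def par_def S E by simp
  next
    assume "\<not> bit b i" "bit b j"
    then have E: "{k. (k = i \<or> k = j) \<and> bit b k} = {j}" by auto
    show ?thesis using assms \<open>\<not> bit b i\<close> \<open>bit b j\<close> unfolding chi_def par_def S E by simp
  next
    assume "\<not> bit b i" "\<not> bit b j"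
    then have E: "{k. (k = i \<or> k = j) \<and> bit b k} = {}" by auto
    show ?thesis using assms \<open>\<not> bit b i\<close> \<open>\<not> bit b j\<close> unfolding chi_def par_def S E by simp
  qed
qed

lemma xor3_zero_iff: "xor (xor a a') c = (0::nat) \<longleftrightarrow> a' = xor a c"
proof -
  have "xor (xor a a') c = 0 \<longleftrightarrow> (\<forall>k. bit (xor (xor a a') c) k = bit (0::nat) k)" by (rule nat_bit_eq_iff)
  also have "\<dots> \<longleftrightarrow> (\<forall>k. bit a' k = bit (xor a c) k)" by (simp add: bit_xor_iff) blast
  also have "\<dots> \<longleftrightarrow> a' = xor a c" using nat_bit_eq_iff by blast
  finally show ?thesis .
qed

lemma fourier:
  assumes c: "c < 2^n" and W: "\<And>b. W b = (\<Sum>a<2^n. chi n b a * g a)"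
  shows "(\<Sum>b<2^n. cnj (W b) * W b * chi n b c) = of_nat (2^n) * (\<Sum>a<2^n. cnj (g a) * g (xor a c))"
proof -
  let ?N = "(2::nat)^n"
  have "(\<Sum>b<?N. cnj (W b) * W b * chi n b c)
      = (\<Sum>b<?N. \<Sum>a<?N. \<Sum>a'<?N. cnj (g a) * g a' * chi n b (xor (xor a a') c))"
  proof (intro sum.cong refl)
    fix b
    have "cnj (W b) * W b * chi n b c = (\<Sum>a<?N. chi n b a * cnj (g a)) * (\<Sum>a'<?N. chi n b a' * g a') * chi n b c"
      by (simp add: W cnj_sum)
    also have "\<dots> = (\<Sum>a<?N. \<Sum>a'<?N. (chi n b a * cnj (g a)) * (chi n b a' * g a') * chi n b c)"
      by (simp add: sum_distrib_left sum_distrib_right mult.assoc, rule sum.swap)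
    also have "\<dots> = (\<Sum>a<?N. \<Sum>a'<?N. cnj (g a) * g a' * chi n b (xor (xor a a') c))"
      by (intro sum.cong refl) (simp add: chi_xor algebra_simps)
    finally show "cnj (W b) * W b * chi n b c = (\<Sum>a<?N. \<Sum>a'<?N. cnj (g a) * g a' * chi n b (xor (xor a a') c))" .
  qed
  also have "\<dots> = (\<Sum>a<?N. \<Sum>b<?N. \<Sum>a'<?N. cnj (g a) * g a' * chi n b (xor (xor a a') c))"
    by (rule sum.swap)
  also have "\<dots> = (\<Sum>a<?N. \<Sum>a'<?N. \<Sum>b<?N. cnj (g a) * g a' * chi n b (xor (xor a a') c))"
    by (intro sum.cong refl sum.swap)
  also have "\<dots> = (\<Sum>a<?N. \<Sum>a'<?N. cnj (g a) * g a' * (if a' = xor a c then of_nat ?N else 0))"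
  proof (intro sum.cong refl)
    fix a a' assume "a \<in> {..<?N}" "a' \<in> {..<?N}"
    then have lt: "xor (xor a a') c < ?N" using c by (auto intro!: xor_lt)
    show "(\<Sum>b<?N. cnj (g a) * g a' * chi n b (xor (xor a a') c)) = cnj (g a) * g a' * (if a' = xor a c then of_nat ?N else 0)"
      by (simp add: sum_distrib_left[symmetric] chi_sum[OF lt] xor3_zero_iff)
  qed
  also have "\<dots> = (\<Sum>a<?N. cnj (g a) * g (xor a c) * of_nat ?N)"
  proof (intro sum.cong refl)
    fix a assume "a \<in> {..<?N}"
    then have lt: "xor a c < ?N" using c by (auto intro!: xor_lt)
    have "(\<Sum>a'<?N. cnj (g a) * g a' * (if a' = xor a c then of_nat ?N else 0))
        = (\<Sum>a'<?N. if a' = xor a c then cnj (g a) * g a' * of_nat ?N else 0)"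
      by (intro sum.cong refl) simp
    also have "\<dots> = cnj (g a) * g (xor a c) * of_nat ?N"
      using lt by (simp add: sum.delta')
    finally show "(\<Sum>a'<?N. cnj (g a) * g a' * (if a' = xor a c then of_nat ?N else 0)) = cnj (g a) * g (xor a c) * of_nat ?N" .
  qed
  also have "\<dots> = of_nat ?N * (\<Sum>a<?N. cnj (g a) * g (xor a c))"
    by (simp add: sum_distrib_left mult.commute)
  finally show ?thesis .
qed

definition cutv :: "nat set set \<Rightarrow> nat \<Rightarrow> real" where
  "cutv E b = (\<Sum>e\<in>E. if bit b (Min e) \<noteq> bit b (Max e) then 1 else 0)"

definition cce :: "nat set \<Rightarrow> nat" where "cce e = cc (Min e) (Max e)"

lemma cce_lt: "simple_graph n E \<Longrightarrow> e \<in> E \<Longrightarrow> cce e < 2^n"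
  unfolding cce_def using edge_props by (metis cc_lt order.strict_trans)

lemma X_bound:
  assumes G: "simple_graph n E" and C: "\<And>b. b < 2^n \<Longrightarrow> cutv E b \<le> C"
  shows "Re (\<Sum>e\<in>E. ip (2^n) g (\<lambda>a. (g a - g (xor a (cce e))) / 2)) \<le> C * Re (ip (2^n) g g)"
proof -
  define N where "N = (2::nat)^n"
  define W where "W b = (\<Sum>a<N. chi n b a * g a)" for b
  define w where "w b = (cmod (W b))^2" for b
  have Npos: "N > 0" unfolding N_def by simp
  have ww: "cnj (W b) * W b = complex_of_real (w b)" for b
    unfolding w_def by (subst complex_norm_square) (simp add: mult.commute)
  have F: "ip N g (\<lambda>a. g (xor a c)) = (\<Sum>b<N. complex_of_real (w b) * chi n b c) / of_nat N"
    if c: "c < N" for c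
  proof -
    have "(\<Sum>b<N. cnj (W b) * W b * chi n b c) = of_nat N * (\<Sum>a<N. cnj (g a) * g (xor a c))"
      unfolding N_def by (rule fourier) (use c in \<open>simp_all add: N_def W_def\<close>)
    then show ?thesis using Npos unfolding ip_def ww by (simp add: field_simps)
  qed
  have F0: "ip N g g = (\<Sum>b<N. complex_of_real (w b)) / of_nat N"
    using F[of 0] Npos by simp
  have Fe: "ip N g (\<lambda>a. (g a - g (xor a (cce e))) / 2)
      = (\<Sum>b<N. complex_of_real (w b * (if bit b (Min e) \<noteq> bit b (Max e) then 1 else 0))) / of_nat N"
    if e: "e \<in> E" for e
  proof -
    have ce: "cce e < N" unfolding N_def by (rule cce_lt[OF G e])
    have mm: "Min e < n" "Max e < n" "Min e \<noteq> Max e" using edge_props[OF G e] by auto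
    have "ip N g (\<lambda>a. (g a - g (xor a (cce e))) / 2) = (1/2) * (ip N g g - ip N g (\<lambda>a. g (xor a (cce e))))"
      by (simp add: ip_diff[symmetric] ip_scale[symmetric] field_simps)
    also have "\<dots> = (1/2) * ((\<Sum>b<N. complex_of_real (w b)) - (\<Sum>b<N. complex_of_real (w b) * chi n b (cce e))) / of_nat N"
      unfolding F0 F[OF ce] using Npos by (simp add: field_simps)
    also have "\<dots> = (\<Sum>b<N. complex_of_real (w b * (if bit b (Min e) \<noteq> bit b (Max e) then 1 else 0))) / of_nat N"
    proof -
      have "(\<Sum>b<N. complex_of_real (w b)) - (\<Sum>b<N. complex_of_real (w b) * chi n b (cce e))
          = (\<Sum>b<N. 2 * complex_of_real (w b * (if bit b (Min e) \<noteq> bit b (Max e) then 1 else 0)))"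
        unfolding sum_subtractf[symmetric]
        by (intro sum.cong refl) (simp add: cce_def chi_cc[OF mm])
      then show ?thesis by (simp add: sum_distrib_left[symmetric])
    qed
    finally show ?thesis .
  qed
  have "(\<Sum>e\<in>E. ip N g (\<lambda>a. (g a - g (xor a (cce e))) / 2))
      = (\<Sum>e\<in>E. (\<Sum>b<N. complex_of_real (w b * (if bit b (Min e) \<noteq> bit b (Max e) then 1 else 0))) / of_nat N)"
    by (intro sum.cong refl) (rule Fe)
  also have "\<dots> = (\<Sum>b<N. complex_of_real (w b * cutv E b)) / of_nat N"
    unfolding cutv_def sum_divide_distrib[symmetric]
    by (simp add: sum.swap[of _ E] sum_distrib_left)
  finally have "Re (\<Sum>e\<in>E. ip N g (\<lambda>a. (g a - g (xor a (cce e))) / 2)) = (\<Sum>b<N. w b * cutv E b) / real N"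
    by (simp add: Re_divide_of_nat Re_sum)
  also have "\<dots> \<le> (\<Sum>b<N. w b * C) / real N"
    using Npos by (intro divide_right_mono sum_mono mult_left_mono) (auto simp: C N_def w_def)
  also have "\<dots> = C * Re (ip N g g)"
    unfolding F0 by (simp add: Re_divide_of_nat Re_sum sum_distrib_left[symmetric] mult.commute)
  finally show ?thesis unfolding N_def .
qed

definition ph :: "nat \<Rightarrow> nat \<Rightarrow> complex" where
  "ph n a = (\<Prod>k<n. if bit a k then \<i> else 1)"

lemma ph_norm: "cnj (ph n a) * ph n a = 1"
proof -
  have "cnj (ph n a) * ph n a = (\<Prod>k<n. cnj (if bit a k then \<i> else 1) * (if bit a k then \<i> else 1))"
    unfolding ph_def cnj_prod prod.distrib[symmetric] ..
  also have "\<dots> = (\<Prod>k<n. 1)" by (intro prod.cong refl) simp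
  finally show ?thesis by simp
qed

lemma ph_cc:
  assumes ij: "i < n" "j < n" "i \<noteq> j"
  shows "cnj (ph n a) * ph n (xor a (cc i j)) = (if bit a i = bit a j then -1 else 1)"
proof -
  define r where "r k = cnj (if bit a k then \<i> else 1) * (if bit (xor a (cc i j)) k then \<i> else 1)" for k
  have "cnj (ph n a) * ph n (xor a (cc i j)) = (\<Prod>k<n. r k)"
    unfolding ph_def cnj_prod prod.distrib[symmetric] r_def ..
  also have "\<dots> = (\<Prod>k\<in>{i, j}. r k)"
  proof (rule prod.mono_neutral_right)
    show "\<forall>k\<in>{..<n} - {i, j}. r k = 1"
      using ij by (auto simp: r_def bit_xor_iff bit_cc)
  qed (use ij in auto)
  also have "\<dots> = r i * r j" using ij by simp
  also have "\<dots> = (if bit a i = bit a j then -1 else 1)"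
    unfolding r_def using ij by (cases "bit a i"; cases "bit a j") (simp_all add: bit_xor_iff bit_cc)
  finally show ?thesis .
qed

lemma Y_bound:
  assumes G: "simple_graph n E" and C: "\<And>b. b < 2^n \<Longrightarrow> cutv E b \<le> C"
  shows "Re (\<Sum>e\<in>E. ip (2^n) f (\<lambda>a. (f a + (if bit a (Min e) = bit a (Max e) then 1 else -1) * f (xor a (cce e))) / 2))
         \<le> C * Re (ip (2^n) f f)"
proof -
  define g where "g a = ph n a * f a" for a
  have gg: "ip (2^n) g g = ip (2^n) f f"
    unfolding ip_def g_def
  proof (intro sum.cong refl)
    fix a
    have "cnj (ph n a * f a) * (ph n a * f a) = (cnj (ph n a) * ph n a) * (cnj (f a) * f a)" by simp
    then show "cnj (ph n a * f a) * (ph n a * f a) = cnj (f a) * f a" by (simp only: ph_norm) simp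
  qed
  have eq: "ip (2^n) f (\<lambda>a. (f a + (if bit a (Min e) = bit a (Max e) then 1 else -1) * f (xor a (cce e))) / 2)
      = ip (2^n) g (\<lambda>a. (g a - g (xor a (cce e))) / 2)" if e: "e \<in> E" for e
  proof -
    have mm: "Min e < n" "Max e < n" "Min e \<noteq> Max e" using edge_props[OF G e] by auto
    show ?thesis unfolding ip_def
    proof (intro sum.cong refl)
      fix a
      have p1: "cnj (ph n a) * ph n a = 1" by (rule ph_norm)
      have p2: "cnj (ph n a) * ph n (xor a (cce e)) = (if bit a (Min e) = bit a (Max e) then -1 else 1)"
        unfolding cce_def by (rule ph_cc[OF mm])
      have "cnj (g a) * ((g a - g (xor a (cce e))) / 2)
          = cnj (f a) * ((cnj (ph n a) * ph n a) * f a - (cnj (ph n a) * ph n (xor a (cce e))) * f (xor a (cce e))) / 2"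
        unfolding g_def by (simp add: algebra_simps)
      also have "\<dots> = cnj (f a) * ((f a + (if bit a (Min e) = bit a (Max e) then 1 else -1) * f (xor a (cce e))) / 2)"
        unfolding p1 p2 by simp
      finally show "cnj (f a) * ((f a + (if bit a (Min e) = bit a (Max e) then 1 else -1) * f (xor a (cce e))) / 2)
          = cnj (g a) * ((g a - g (xor a (cce e))) / 2)" by simp
    qed
  qed
  have "(\<Sum>e\<in>E. ip (2^n) f (\<lambda>a. (f a + (if bit a (Min e) = bit a (Max e) then 1 else -1) * f (xor a (cce e))) / 2))
      = (\<Sum>e\<in>E. ip (2^n) g (\<lambda>a. (g a - g (xor a (cce e))) / 2))"
    by (intro sum.cong refl eq)
  then show ?thesis using X_bound[OF G C, of g] unfolding gg by simp
qed

lemma of_real_ind: "complex_of_real (if P then 1 else 0) = (if P then 1 else 0)"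
  by simp

lemma Z_bound:
  assumes G: "simple_graph n E" and C: "\<And>b. b < 2^n \<Longrightarrow> cutv E b \<le> C"
  shows "Re (\<Sum>e\<in>E. ip (2^n) f (\<lambda>a. (if bit a (Min e) \<noteq> bit a (Max e) then 1 else 0) * f a))
         \<le> C * Re (ip (2^n) f f)"
proof -
  have "(\<Sum>e\<in>E. ip (2^n) f (\<lambda>a. (if bit a (Min e) \<noteq> bit a (Max e) then 1 else 0) * f a))
      = (\<Sum>a<2^n. complex_of_real (cutv E a * (cmod (f a))^2))"
  proof -
    have "(\<Sum>e\<in>E. ip (2^n) f (\<lambda>a. (if bit a (Min e) \<noteq> bit a (Max e) then 1 else 0) * f a))
        = (\<Sum>a<2^n. \<Sum>e\<in>E. cnj (f a) * ((if bit a (Min e) \<noteq> bit a (Max e) then 1 else 0) * f a))"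
      unfolding ip_def by (rule sum.swap)
    also have "\<dots> = (\<Sum>a<2^n. complex_of_real (cutv E a * (cmod (f a))^2))"
    proof (intro sum.cong refl)
      fix a
      have nf: "cnj (f a) * f a = complex_of_real ((cmod (f a))^2)"
        by (subst complex_norm_square) (simp add: mult.commute)
      have "(\<Sum>e\<in>E. cnj (f a) * ((if bit a (Min e) \<noteq> bit a (Max e) then 1 else 0) * f a))
          = (\<Sum>e\<in>E. (if bit a (Min e) \<noteq> bit a (Max e) then 1 else 0)) * (cnj (f a) * f a)"
        unfolding sum_distrib_right by (rule sum.cong[OF refl]) (simp add: algebra_simps)
      also have "\<dots> = complex_of_real (cutv E a * (cmod (f a))^2)"
        unfolding nf cutv_def of_real_mult of_real_sum of_real_ind by simp
      finally show "(\<Sum>e\<in>E. cnj (f a) * ((if bit a (Min e) \<noteq> bit a (Max e) then 1 else 0) * f a))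
          = complex_of_real (cutv E a * (cmod (f a))^2)" .
    qed
    finally show ?thesis .
  qed
  then have "Re (\<Sum>e\<in>E. ip (2^n) f (\<lambda>a. (if bit a (Min e) \<noteq> bit a (Max e) then 1 else 0) * f a))
      = (\<Sum>a<2^n. cutv E a * (cmod (f a))^2)" by (simp add: Re_sum)
  also have "\<dots> \<le> (\<Sum>a<2^n. C * (cmod (f a))^2)"
    by (intro sum_mono mult_right_mono) (auto simp: C)
  also have "\<dots> = C * Re (ip (2^n) f f)"
    by (simp add: ip_self_Re sum_distrib_left)
  finally show ?thesis .
qed

lemma measure_bound:
  assumes G: "simple_graph n E" and C: "\<And>b. b < 2^n \<Longrightarrow> cutv E b \<le> C"
  shows "Re (\<Sum>e\<in>E. ip (2^n) f (\<lambda>a. 2 * f a - f (sw e a))) \<le> 3 * C * Re (ip (2^n) f f)"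
proof -
  let ?D = "\<lambda>e a. (if bit a (Min e) \<noteq> bit a (Max e) then 1 else 0) * f a"
  let ?X = "\<lambda>e a. (f a - f (xor a (cce e))) / 2"
  let ?Y = "\<lambda>e a. (f a + (if bit a (Min e) = bit a (Max e) then 1 else -1) * f (xor a (cce e))) / 2"
  have pt: "2 * f a - f (sw e a) = ?D e a + ?X e a + ?Y e a" if e: "e \<in> E" for e a
  proof -
    have "Min e \<noteq> Max e" using edge_props[OF G e] by auto
    then show ?thesis
      unfolding sw_def swp_def cce_def
      by (cases "bit a (Min e) = bit a (Max e)") (simp_all add: field_simps)
  qed
  have "(\<Sum>e\<in>E. ip (2^n) f (\<lambda>a. 2 * f a - f (sw e a)))
      = (\<Sum>e\<in>E. ip (2^n) f (?D e)) + (\<Sum>e\<in>E. ip (2^n) f (?X e)) + (\<Sum>e\<in>E. ip (2^n) f (?Y e))"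
  proof -
    have "(\<Sum>e\<in>E. ip (2^n) f (\<lambda>a. 2 * f a - f (sw e a)))
        = (\<Sum>e\<in>E. ip (2^n) f (?D e) + ip (2^n) f (?X e) + ip (2^n) f (?Y e))"
    proof (intro sum.cong refl)
      fix e assume e: "e \<in> E"
      have "ip (2^n) f (\<lambda>a. 2 * f a - f (sw e a)) = ip (2^n) f (\<lambda>a. ?D e a + ?X e a + ?Y e a)"
        using pt[OF e] by (intro ip_cong) simp
      also have "\<dots> = ip (2^n) f (?D e) + ip (2^n) f (?X e) + ip (2^n) f (?Y e)"
        by (simp only: ip_add)
      finally show "ip (2^n) f (\<lambda>a. 2 * f a - f (sw e a)) = ip (2^n) f (?D e) + ip (2^n) f (?X e) + ip (2^n) f (?Y e)" .
    qed
    then show ?thesis by (simp add: sum.distrib)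
  qed
  then have "Re (\<Sum>e\<in>E. ip (2^n) f (\<lambda>a. 2 * f a - f (sw e a)))
      = Re (\<Sum>e\<in>E. ip (2^n) f (?D e)) + Re (\<Sum>e\<in>E. ip (2^n) f (?X e)) + Re (\<Sum>e\<in>E. ip (2^n) f (?Y e))"
    by simp
  also have "\<dots> \<le> C * Re (ip (2^n) f f) + C * Re (ip (2^n) f f) + C * Re (ip (2^n) f f)"
    using Z_bound[OF G C, of f] X_bound[OF G C, of f] Y_bound[OF G C, of f] by linarith
  finally show ?thesis by simp
qed

lemma trace_comm:
  assumes X: "(X :: complex mat) \<in> carrier_mat N M" and Y: "Y \<in> carrier_mat M N"
  shows "(\<Sum>i<N. (X * Y) $$ (i, i)) = (\<Sum>j<M. (Y * X) $$ (j, j))"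
proof -
  have "(\<Sum>i<N. (X * Y) $$ (i, i)) = (\<Sum>i<N. \<Sum>j<M. X $$ (i, j) * Y $$ (j, i))"
    using X Y by (intro sum.cong refl) (auto simp: scalar_prod_def atLeast0LessThan)
  also have "\<dots> = (\<Sum>j<M. \<Sum>i<N. X $$ (i, j) * Y $$ (j, i))"
    by (rule sum.swap)
  also have "\<dots> = (\<Sum>j<M. \<Sum>i<N. Y $$ (j, i) * X $$ (i, j))"
    by (intro sum.cong refl) (rule mult.commute)
  also have "\<dots> = (\<Sum>j<M. (Y * X) $$ (j, j))"
    using X Y by (intro sum.cong refl) (auto simp: scalar_prod_def atLeast0LessThan)
  finally show ?thesis .
qed

lemma pos_eigenvalue:
  assumes A: "(A :: complex mat) \<in> carrier_mat N N" and tr: "Re (\<Sum>i<N. A $$ (i, i)) > 0"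
  shows "\<exists>k. eigenvalue A k \<and> Re k > 0"
proof -
  obtain es where es: "char_poly A = (\<Prod>a\<leftarrow>es. [:- a, 1:])"
    using char_poly_factorized[OF A] by blast
  define B where "B = schur_upper_triangular A es"
  have Bc: "B \<in> carrier_mat N N" and ut: "upper_triangular B" and sim: "similar_mat A B"
    using schur_upper_triangular[OF A es] unfolding B_def by auto
  obtain P Q where w: "similar_mat_wit A B P Q" using sim unfolding similar_mat_def by blast
  have dA: "dim_row A = N" using A by simp
  have Pc: "P \<in> carrier_mat N N" and Qc: "Q \<in> carrier_mat N N" and QP: "Q * P = 1\<^sub>m N"
    and AP: "A = P * B * Q"
    using w unfolding similar_mat_wit_def Let_def dA by auto
  have "(\<Sum>i<N. A $$ (i, i)) = (\<Sum>i<N. (P * (B * Q)) $$ (i, i))"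
    unfolding AP using Pc Bc Qc by (simp add: assoc_mult_mat[of P N N B N Q N])
  also have "\<dots> = (\<Sum>i<N. ((B * Q) * P) $$ (i, i))"
    by (rule trace_comm[OF Pc]) (use Bc Qc in auto)
  also have "(B * Q) * P = B"
    using Bc Qc Pc QP by (simp add: assoc_mult_mat[of B N N Q N P N])
  finally have trB: "(\<Sum>i<N. A $$ (i, i)) = (\<Sum>i<N. B $$ (i, i))" .
  have "\<exists>i<N. Re (B $$ (i, i)) > 0"
  proof (rule ccontr)
    assume "\<not> (\<exists>i<N. Re (B $$ (i, i)) > 0)"
    then have "\<forall>i<N. Re (B $$ (i, i)) \<le> 0" by force
    then have "Re (\<Sum>i<N. B $$ (i, i)) \<le> 0" unfolding Re_sum by (intro sum_nonpos) auto
    then show False using tr trB by simp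
  qed
  then obtain i where i: "i < N" "Re (B $$ (i, i)) > 0" by blast
  have cpB: "char_poly B = (\<Prod>a\<leftarrow>diag_mat B. [:- a, 1:])"
    by (rule char_poly_upper_triangular[OF Bc ut])
  have "B $$ (i, i) \<in> set (diag_mat B)" using i Bc unfolding diag_mat_def by auto
  then have "poly (char_poly B) (B $$ (i, i)) = 0" unfolding cpB by (rule linear_poly_root)
  then have "poly (char_poly A) (B $$ (i, i)) = 0" using char_poly_similar[OF sim] by simp
  then have "eigenvalue A (B $$ (i, i))" using eigenvalue_root_char_poly[OF A] by simp
  then show ?thesis using i by blast
qed

lemma sw_fix_iff:
  assumes G: "simple_graph n E" and e: "e \<in> E"
  shows "sw e a = a \<longleftrightarrow> bit a (Min e) = bit a (Max e)"
proof -
  have mm: "Min e \<noteq> Max e" using edge_props[OF G e] by auto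
  show ?thesis
  proof (cases "bit a (Min e) = bit a (Max e)")
    case True then show ?thesis unfolding sw_def swp_def by simp
  next
    case False
    have "bit (xor a (cc (Min e) (Max e))) (Min e) \<noteq> bit a (Min e)"
      using mm by (simp add: bit_xor_iff bit_cc)
    then have "xor a (cc (Min e) (Max e)) \<noteq> a" by auto
    then show ?thesis using False unfolding sw_def swp_def by simp
  qed
qed

lemma H_basis:
  assumes G: "simple_graph n E" and k: "k < 2^n"
  shows "(hamiltonian n E (\<lambda>_. 1) *\<^sub>v unit_vec (2^n) k) $ k = complex_of_real (cutv E k)"
proof -
  have "(hamiltonian n E (\<lambda>_. 1) *\<^sub>v unit_vec (2^n) k) $ k
      = (\<Sum>e\<in>E. unit_vec (2^n) k $ k - unit_vec (2^n) k $ (sw e k))"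
    by (rule H_act[OF G _ k]) simp
  also have "\<dots> = (\<Sum>e\<in>E. if bit k (Min e) \<noteq> bit k (Max e) then 1 else 0)"
  proof (intro sum.cong refl)
    fix e assume e: "e \<in> E"
    have "sw e k < 2^n" by (rule sw_lt[OF G e k])
    then show "unit_vec (2^n) k $ k - unit_vec (2^n) k $ (sw e k) = (if bit k (Min e) \<noteq> bit k (Max e) then 1 else (0::complex))"
      using k sw_fix_iff[OF G e, of k] by (cases "bit k (Min e) = bit k (Max e)") simp_all
  qed
  also have "\<dots> = complex_of_real (cutv E k)"
    unfolding cutv_def of_real_sum of_real_ind ..
  finally show ?thesis .
qed

lemma energy_basis:
  assumes G: "simple_graph n E" and k: "k < 2^n"
  shows "energy (hamiltonian n E (\<lambda>_. 1)) (comp_basis n k) = cutv E k"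
proof -
  let ?u = "unit_vec (2^n) k"
  have "energy (hamiltonian n E (\<lambda>_. 1)) (comp_basis n k)
      = Re (\<Sum>a<2^n. cnj (?u $ a) * (hamiltonian n E (\<lambda>_. 1) *\<^sub>v ?u) $ a)"
    unfolding energy_def comp_basis_def by simp
  also have "(\<Sum>a<2^n. cnj (?u $ a) * (hamiltonian n E (\<lambda>_. 1) *\<^sub>v ?u) $ a)
      = (\<Sum>a<2^n. if a = k then (hamiltonian n E (\<lambda>_. 1) *\<^sub>v ?u) $ a else 0)"
    using k by (intro sum.cong refl) simp
  also have "\<dots> = (hamiltonian n E (\<lambda>_. 1) *\<^sub>v ?u) $ k" using k by (simp add: sum.delta')
  also have "\<dots> = complex_of_real (cutv E k)" by (rule H_basis[OF G k])
  finally show ?thesis by simp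
qed

lemma H_diag:
  assumes G: "simple_graph n E" and k: "k < 2^n"
  shows "hamiltonian n E (\<lambda>_. 1) $$ (k, k) = complex_of_real (cutv E k)"
proof -
  have "(hamiltonian n E (\<lambda>_. 1) *\<^sub>v unit_vec (2^n) k) $ k = (\<Sum>b<2^n. hamiltonian n E (\<lambda>_. 1) $$ (k, b) * unit_vec (2^n) k $ b)"
    by (rule mv_entry[OF ham_carrier _ k]) simp
  also have "\<dots> = (\<Sum>b<2^n. if b = k then hamiltonian n E (\<lambda>_. 1) $$ (k, b) else 0)"
    using k by (intro sum.cong refl) simp
  also have "\<dots> = hamiltonian n E (\<lambda>_. 1) $$ (k, k)" using k by (simp add: sum.delta')
  finally show ?thesis using H_basis[OF G k] by simp
qed

lemma eig_bound:
  assumes G: "simple_graph n E" and C: "\<And>b. b < 2^n \<Longrightarrow> cutv E b \<le> C"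
    and ev: "eigenvalue (hamiltonian n E (\<lambda>_. 1)) k"
  shows "Re k * (4 * real (card E) + real n) \<le> 3 * C * (2 * real (card E) + real n)"
proof -
  let ?H = "hamiltonian n E (\<lambda>_. 1)"
  let ?N = "(2::nat)^n"
  define m where "m = real (card E)"
  obtain v where v: "v \<in> carrier_vec ?N" "v \<noteq> 0\<^sub>v ?N" "?H *\<^sub>v v = k \<cdot>\<^sub>v v"
    using ev unfolding eigenvalue_def eigenvector_def by (auto simp: hamiltonian_def)
  define f where "f a = v $ a" for a
  define q where "q = Re (ip ?N f f)"
  define S where "S = Re (\<Sum>e\<in>E. ip ?N f (\<lambda>a. f (sw e a)))"
  have fE: "finite E" by (rule finite_E[OF G])
  have "\<exists>a<?N. v $ a \<noteq> 0"
  proof (rule ccontr)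
    assume "\<not> (\<exists>a<?N. v $ a \<noteq> 0)"
    then have "v = 0\<^sub>v ?N" using v(1) by (intro eq_vecI) auto
    then show False using v(2) by simp
  qed
  then obtain a0 where a0: "a0 < ?N" "f a0 \<noteq> 0" unfolding f_def by blast
  have qpos: "q > 0"
  proof -
    have "q = (\<Sum>a<?N. (cmod (f a))^2)" unfolding q_def by (rule ip_self_Re)
    also have "\<dots> \<ge> (cmod (f a0))^2"
      by (rule member_le_sum) (use a0 in auto)
    moreover have "(cmod (f a0))^2 > 0" using a0 by simp
    ultimately show ?thesis by linarith
  qed
  have Hv: "ip ?N f (\<lambda>a. (?H *\<^sub>v v) $ a) = k * ip ?N f f"
  proof -
    have "ip ?N f (\<lambda>a. (?H *\<^sub>v v) $ a) = ip ?N f (\<lambda>a. k * f a)"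
      using v(1) by (intro ip_cong) (simp add: v(3) f_def)
    then show ?thesis by (simp add: ip_scale)
  qed
  have Hv2: "ip ?N f (\<lambda>a. (?H *\<^sub>v v) $ a) = of_nat (card E) * ip ?N f f - (\<Sum>e\<in>E. ip ?N f (\<lambda>a. f (sw e a)))"
  proof -
    have "ip ?N f (\<lambda>a. (?H *\<^sub>v v) $ a) = ip ?N f (\<lambda>a. \<Sum>e\<in>E. f a - f (sw e a))"
      by (intro ip_cong) (simp add: H_act[OF G v(1)] f_def)
    also have "\<dots> = (\<Sum>e\<in>E. ip ?N f f - ip ?N f (\<lambda>a. f (sw e a)))"
      by (simp add: ip_sum ip_diff)
    finally show ?thesis by (simp add: sum_subtractf)
  qed
  have ipr: "ip ?N f f = complex_of_real q" unfolding q_def ip_self by simp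
  have RE: "Re k * q = m * q - S"
  proof -
    have r1: "Re (k * ip ?N f f) = Re k * q" unfolding ipr by simp
    have r2: "Re (of_nat (card E) * ip ?N f f - (\<Sum>e\<in>E. ip ?N f (\<lambda>a. f (sw e a)))) = m * q - S"
      unfolding ipr S_def m_def by simp
    have eq: "k * ip ?N f f = of_nat (card E) * ip ?N f f - (\<Sum>e\<in>E. ip ?N f (\<lambda>a. f (sw e a)))"
      using Hv Hv2 by simp
    have "Re k * q = Re (k * ip ?N f f)" using r1 by simp
    also have "\<dots> = Re (of_nat (card E) * ip ?N f f - (\<Sum>e\<in>E. ip ?N f (\<lambda>a. f (sw e a))))"
      using eq by (rule arg_cong)
    also have "\<dots> = m * q - S" by (rule r2)
    finally show ?thesis .
  qed
  have A1: "2 * S + real n * q \<ge> 0"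
    unfolding S_def q_def by (rule swap_total[OF G])
  have A2: "2 * m * q - S \<le> 3 * C * q"
  proof -
    have "Re (\<Sum>e\<in>E. ip ?N f (\<lambda>a. 2 * f a - f (sw e a))) \<le> 3 * C * q"
      unfolding q_def by (rule measure_bound[OF G C])
    moreover have "(\<Sum>e\<in>E. ip ?N f (\<lambda>a. 2 * f a - f (sw e a))) = 2 * of_nat (card E) * ip ?N f f - (\<Sum>e\<in>E. ip ?N f (\<lambda>a. f (sw e a)))"
      by (simp add: ip_diff ip_scale sum_subtractf)
    moreover have "Re (2 * of_nat (card E) * ip ?N f f - (\<Sum>e\<in>E. ip ?N f (\<lambda>a. f (sw e a)))) = 2 * m * q - S"
      unfolding ipr S_def m_def by simp
    ultimately show ?thesis by simp
  qed
  have b1: "Re k \<le> m + real n / 2"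
  proof -
    have "Re k * q \<le> (m + real n / 2) * q" using RE A1 by (simp add: algebra_simps)
    then show ?thesis using qpos by simp
  qed
  have b2: "Re k + m \<le> 3 * C"
  proof -
    have "(Re k + m) * q \<le> (3 * C) * q" using RE A2 by (simp add: algebra_simps)
    then show ?thesis using qpos by simp
  qed
  have m0: "m \<ge> 0" unfolding m_def by simp
  have "Re k * (4 * m + real n) = Re k * (2 * m + real n) + 2 * m * Re k" by (simp add: algebra_simps)
  also have "\<dots> \<le> Re k * (2 * m + real n) + 2 * m * (m + real n / 2)"
    using b1 m0 by (intro add_left_mono mult_left_mono) auto
  also have "\<dots> = (Re k + m) * (2 * m + real n)" by (simp add: algebra_simps)
  also have "\<dots> \<le> 3 * C * (2 * m + real n)"
    using b2 m0 by (intro mult_right_mono) auto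
  finally show ?thesis unfolding m_def .
qed

lemma energy_le:
  assumes G: "simple_graph n E" and v: "v \<in> carrier_vec (2^n)" and b: "\<And>a. a < 2^n \<Longrightarrow> cmod (v $ a) \<le> 1"
  shows "energy (hamiltonian n E (\<lambda>_. 1)) v \<le> 2 * real (card E) * 2^n"
proof -
  let ?H = "hamiltonian n E (\<lambda>_. 1)"
  have dv: "dim_vec v = 2^n" using v by simp
  have hb: "cmod ((?H *\<^sub>v v) $ a) \<le> 2 * real (card E)" if a: "a < 2^n" for a
  proof -
    have "cmod ((?H *\<^sub>v v) $ a) = cmod (\<Sum>e\<in>E. v $ a - v $ (sw e a))" by (simp add: H_act[OF G v a])
    also have "\<dots> \<le> (\<Sum>e\<in>E. cmod (v $ a - v $ (sw e a)))" by (rule norm_sum)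
    also have "\<dots> \<le> (\<Sum>e\<in>E. 2)"
    proof (intro sum_mono)
      fix e assume e: "e \<in> E"
      have "cmod (v $ a - v $ (sw e a)) \<le> cmod (v $ a) + cmod (v $ (sw e a))" by (rule norm_triangle_ineq4)
      also have "\<dots> \<le> 1 + 1" using b[OF a] b[OF sw_lt[OF G e a]] by (rule add_mono)
      finally show "cmod (v $ a - v $ (sw e a)) \<le> 2" by simp
    qed
    finally show ?thesis by simp
  qed
  have "energy ?H v = Re (\<Sum>a<2^n. cnj (v $ a) * (?H *\<^sub>v v) $ a)" unfolding energy_def dv ..
  also have "\<dots> \<le> cmod (\<Sum>a<2^n. cnj (v $ a) * (?H *\<^sub>v v) $ a)" by (rule complex_Re_le_cmod)
  also have "\<dots> \<le> (\<Sum>a<2^n. cmod (cnj (v $ a) * (?H *\<^sub>v v) $ a))" by (rule norm_sum)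
  also have "\<dots> \<le> (\<Sum>a<(2::nat)^n. 2 * real (card E))"
  proof (intro sum_mono)
    fix a assume "a \<in> {..<(2::nat)^n}"
    then have a: "a < 2^n" by simp
    have "cmod (cnj (v $ a) * (?H *\<^sub>v v) $ a) = cmod (v $ a) * cmod ((?H *\<^sub>v v) $ a)" by (simp add: norm_mult)
    also have "\<dots> \<le> 1 * (2 * real (card E))"
      using b[OF a] hb[OF a] by (intro mult_mono) auto
    finally show "cmod (cnj (v $ a) * (?H *\<^sub>v v) $ a) \<le> 2 * real (card E)" by simp
  qed
  also have "\<dots> = 2 * real (card E) * 2^n" by simp
  finally show ?thesis .
qed

lemma product_bound:
  assumes "product_state n v"
  shows "v \<in> carrier_vec (2^n)" "\<And>a. a < 2^n \<Longrightarrow> cmod (v $ a) \<le> 1"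
proof -
  obtain \<phi> where phi: "\<forall>i<n. (cmod (\<phi> i 0))\<^sup>2 + (cmod (\<phi> i 1))\<^sup>2 = 1"
    and v: "v = vec (2 ^ n) (\<lambda>k. \<Prod>i<n. \<phi> i (bit_of k i))"
    using assms unfolding product_state_def by blast
  show "v \<in> carrier_vec (2^n)" unfolding v by simp
  fix a :: nat assume a: "a < 2^n"
  have pb: "cmod (\<phi> i (bit_of a i)) \<le> 1" if i: "i < n" for i
  proof -
    have h: "(cmod (\<phi> i 0))\<^sup>2 \<le> 1" "(cmod (\<phi> i 1))\<^sup>2 \<le> 1" using phi i by (smt (verit) zero_le_power2)+
    have "(cmod (\<phi> i (bit_of a i)))\<^sup>2 \<le> 1"
      using h bit_of_lt[of a i] by (cases "bit_of a i = 0") (auto simp: bit_of_eq split: if_splits)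
    then show ?thesis by (simp add: power_le_one_iff abs_square_le_1)
  qed
  have "cmod (v $ a) = (\<Prod>i<n. cmod (\<phi> i (bit_of a i)))" unfolding v using a by (simp add: prod_norm)
  also have "\<dots> \<le> 1" by (rule prod_le_1) (auto simp: pb)
  finally show "cmod (v $ a) \<le> 1" .
qed

lemma basis_product:
  assumes k: "k < 2^n"
  shows "product_state n (comp_basis n k)"
  unfolding product_state_def
proof (intro exI conjI allI impI)
  let ?\<phi> = "\<lambda>i b. if b = bit_of k i then 1 else (0::complex)"
  fix i assume "i < n"
  show "(cmod (?\<phi> i 0))\<^sup>2 + (cmod (?\<phi> i 1))\<^sup>2 = 1"
    using bit_of_lt[of k i] by (cases "bit_of k i = 0") auto
next
  let ?\<phi> = "\<lambda>i b. if b = bit_of k i then 1 else (0::complex)"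
  show "comp_basis n k = vec (2 ^ n) (\<lambda>a. \<Prod>i<n. ?\<phi> i (bit_of a i))"
  proof (rule eq_vecI)
    show "dim_vec (comp_basis n k) = dim_vec (vec (2 ^ n) (\<lambda>a. \<Prod>i<n. ?\<phi> i (bit_of a i)))"
      unfolding comp_basis_def by simp
    fix a assume "a < dim_vec (vec (2 ^ n) (\<lambda>a. \<Prod>i<n. ?\<phi> i (bit_of a i)))"
    then have a: "a < 2^n" by simp
    show "comp_basis n k $ a = vec (2 ^ n) (\<lambda>a. \<Prod>i<n. ?\<phi> i (bit_of a i)) $ a"
    proof (cases "a = k")
      case True then show ?thesis using a unfolding comp_basis_def by simp
    next
      case False
      then obtain i where i: "i < n" "bit a i \<noteq> bit k i" using nat_eq_bits[OF a k] by blast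
      then have "bit_of a i \<noteq> bit_of k i" by (simp add: bit_of_eq)
      then have "(\<Prod>i<n. ?\<phi> i (bit_of a i)) = 0" using i by (intro prod_zero) auto
      then show ?thesis using a k False unfolding comp_basis_def by simp
    qed
  qed
qed

theorem theorem5:
  fixes n :: nat and E :: "nat set set"
  assumes "simple_graph n E"
    and "connected_graph n E"
    and "E \<noteq> {}"
  shows "PROD_G n E (\<lambda>_. 1) / OPT_G n E (\<lambda>_. 1)
           \<ge> 1/3 + 2/3 * (real (card E) / (2 * real (card E) + real n)) \<and>
         (\<exists>k<2 ^ n. energy (hamiltonian n E (\<lambda>_. 1)) (comp_basis n k) / OPT_G n E (\<lambda>_. 1)
           \<ge> 1/3 + 2/3 * (real (card E) / (2 * real (card E) + real n)))"
proof -
  note G = assms(1)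
  let ?H = "hamiltonian n E (\<lambda>_. 1)"
  let ?N = "(2::nat)^n"
  define m where "m = real (card E)"
  have fE: "finite E" by (rule finite_E[OF G])
  have m1: "m \<ge> 1" unfolding m_def using fE assms(3) by (simp add: Suc_le_eq card_gt_0_iff)
  define C where "C = Max (cutv E ` {..<?N})"
  have Cge: "\<And>b. b < ?N \<Longrightarrow> cutv E b \<le> C" unfolding C_def by (intro Max_ge) auto
  have neN: "{..<?N} \<noteq> {}" by (simp add: lessThan_empty_iff)
  have "C \<in> cutv E ` {..<?N}" unfolding C_def using neN by (intro Max_in) auto
  then obtain kmax where kmax: "kmax < ?N" "cutv E kmax = C" by auto
  define S where "S = {k. eigenvalue ?H k}"
  have finS: "finite S"
    using card_finite_spectrum(1)[OF ham_carrier[of n E "\<lambda>_. 1"]] unfolding S_def spectrum_def .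
  obtain e0 where e0: "e0 \<in> E" using assms(3) by blast
  have mm0: "Min e0 < Max e0" "Max e0 < n" using edge_props[OF G e0] by auto
  define a0 where "a0 = (2::nat) ^ Min e0"
  have a0N: "a0 < ?N" unfolding a0_def using mm0 by simp
  have cut_nonneg: "cutv E b \<ge> 0" for b unfolding cutv_def by (intro sum_nonneg) auto
  have "cutv E a0 \<ge> 1"
  proof -
    have "(if bit a0 (Min e0) \<noteq> bit a0 (Max e0) then 1 else 0 :: real) = 1"
      unfolding a0_def using mm0 by (simp add: bit_pow2)
    moreover have "(if bit a0 (Min e0) \<noteq> bit a0 (Max e0) then 1 else 0 :: real) \<le> cutv E a0"
      unfolding cutv_def by (rule member_le_sum[OF e0]) (auto simp: fE)
    ultimately show ?thesis by simp
  qed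
  then have trpos: "Re (\<Sum>i<?N. ?H $$ (i, i)) > 0"
  proof -
    assume c1: "cutv E a0 \<ge> 1"
    have "Re (\<Sum>i<?N. ?H $$ (i, i)) = (\<Sum>i<?N. cutv E i)"
      by (simp add: Re_sum H_diag[OF G])
    also have "\<dots> \<ge> cutv E a0" by (rule member_le_sum) (auto simp: a0N cut_nonneg)
    finally show ?thesis using c1 by simp
  qed
  obtain k0 where k0: "eigenvalue ?H k0" "Re k0 > 0"
    using pos_eigenvalue[OF ham_carrier trpos] by blast
  define OPT where "OPT = OPT_G n E (\<lambda>_. 1)"
  have OPTd: "OPT = Max (Re ` S)" unfolding OPT_def OPT_G_def S_def ..
  have ne: "Re ` S \<noteq> {}" using k0 unfolding S_def by auto
  have "OPT \<ge> Re k0" unfolding OPTd using finS k0 unfolding S_def by (intro Max_ge) auto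
  then have OPTpos: "OPT > 0" using k0 by simp
  have "OPT \<in> Re ` S" unfolding OPTd using finS ne by (intro Max_in) auto
  then obtain kk where kk: "eigenvalue ?H kk" "OPT = Re kk" unfolding S_def by auto
  have OB: "OPT * (4 * m + real n) \<le> 3 * C * (2 * m + real n)"
    using eig_bound[OF G Cge kk(1)] kk(2) unfolding m_def by simp
  define r where "r = 1/3 + 2/3 * (m / (2 * m + real n))"
  have pos2: "2 * m + real n > 0" using m1 by simp
  have r_eq: "r = (4 * m + real n) / (3 * (2 * m + real n))"
    unfolding r_def using pos2 by (simp add: field_simps)
  have CO: "C / OPT \<ge> r"
  proof -
    have "r * OPT = OPT * (4 * m + real n) / (3 * (2 * m + real n))" unfolding r_eq by simp
    also have "\<dots> \<le> 3 * C * (2 * m + real n) / (3 * (2 * m + real n))"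
      using OB pos2 by (intro divide_right_mono) auto
    also have "\<dots> = C" using pos2 by (simp add: field_simps)
    finally show ?thesis using OPTpos by (simp add: pos_le_divide_eq)
  qed
  have eC: "energy ?H (comp_basis n kmax) = C" using energy_basis[OF G kmax(1)] kmax(2) by simp
  have PC: "PROD_G n E (\<lambda>_. 1) \<ge> C"
  proof -
    have bdd: "bdd_above ((\<lambda>v. energy ?H v) ` {v. product_state n v})"
    proof (rule bdd_aboveI)
      fix x assume "x \<in> (\<lambda>v. energy ?H v) ` {v. product_state n v}"
      then obtain v where "product_state n v" "x = energy ?H v" by auto
      then show "x \<le> 2 * real (card E) * 2^n"
        using energy_le[OF G product_bound] by auto
    qed
    have mem: "energy ?H (comp_basis n kmax) \<in> (\<lambda>v. energy ?H v) ` {v. product_state n v}"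
      using basis_product[OF kmax(1)] by auto
    have "energy ?H (comp_basis n kmax) \<le> PROD_G n E (\<lambda>_. 1)"
      unfolding PROD_G_def by (rule cSup_upper[OF mem bdd])
    then show ?thesis using eC by simp
  qed
  have "PROD_G n E (\<lambda>_. 1) / OPT \<ge> C / OPT"
    using PC OPTpos by (intro divide_right_mono) auto
  then have part1: "PROD_G n E (\<lambda>_. 1) / OPT \<ge> r" using CO by linarith
  have part2: "\<exists>k<2 ^ n. energy ?H (comp_basis n k) / OPT \<ge> r"
    using kmax(1) eC CO by auto
  show ?thesis using part1 part2 unfolding OPT_def r_def m_def by blast
qed

end
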